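(* Let $m\ge 1$ and $s\in\{-,+\}$, and let $s'$ denote the opposite sign. For every polynomial $\hat\phi^s\in\mathbb{P}_m$, considered on $\hat K_F^s$, there exists a unique polynomial $\hat\phi^{s'}\in\mathbb{P}_m$, considered on $\hat K_F^{s'}$, such that the piecewise function $$\hat\phi(\eta,\xi)=\begin{cases}\hat\phi^-(\eta,\xi),&(\eta,\xi)\in\hat K_F^-,\\ \hat\phi^+(\eta,\xi),&(\eta,\xi)\in\hat K_F^+\end{cases}$$ satisfies the interface conditions (C1), (C2) and (C3).
   Context: Frenet coordinates $(\eta,\xi)$; $\mathbb{P}_m$ denotes bivariate polynomials of total degree at most $m$. The set $\hat K_F$ is a bounded region of the $(\eta,\xi)$-plane that is cut by the line $\eta=0$ into $\hat K_F^-=\hat K_F\cap\{\eta<0\}$ and $\hat K_F^+=\hat K_F\cap\{\eta>0\}$. The interface segment is $\hat\Gamma_{K_F}=\{(0,\xi):\xi_0\le\xi\le\xi_1\}\subset\overline{\hat K_F}$ with $\xi_0<\xi_1$. The coefficient $\hat\beta$ equals the positive constant $\beta^-$ on $\hat K_F^-$ and the positive constant $\beta^+$ on $\hat K_F^+$. For a function $\hat w$ that is smooth up to $\eta=0$ from each side, its jump is $[\![\hat w]\!]_{\hat\Gamma_{K_F}}(\xi)=\hat w^+(0,\xi)-\hat w^-(0,\xi)$, where $\hat w^\pm$ are the restrictions of $\hat w$ to $\hat K_F^\pm$. The operator $\mathscr{L}$ is the transformed Laplacian $$\mathscr{L}(\hat u)=\hat u_{\eta\eta}+J_0(\eta,\xi)\hat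 u_{\xi\xi}+J_1(\eta,\xi)\hat u_\eta+J_2(\eta,\xi)\hat u_\xi .$$ Here $J_0,J_1,J_2$ are fixed smooth real-valued functions on $\overline{\hat K_F}$ determined by the geometry (curvature and parametrization) of the interface curve; they are the same on both sides of $\eta=0$. A piecewise function $\hat u$ with $\hat u|_{\hat K_F^\pm}\in\mathbb{P}_m$ satisfies the interface conditions if: - (C1) $[\![\hat u]\!]_{\hat\Gamma_{K_F}}=0$ for all $\xi\in[\xi_0,\xi_1]$; - (C2) $[\![\hat\beta\,\hat u_\eta]\!]_{\hat\Gamma_{K_F}}=0$ for all $\xi\in[\xi_0,\xi_1]$; - (C3) for every $j=0,1,\dots,m-2$ and every $\hat v\in\mathbb{P}_{m-2-j}(\hat\Gamma_{K_F})$, $$\int_{\xi_0}^{\xi_1}\hat v(\xi)\,[\![\hat\beta\,\partial_\eta^j\mathscr{L}(\hat u)]\!]_{\hat\Gamma_{K_F}}(\xi)\,d\xi=0.$$ Condition (C3) is vacuous when $m=1$. *)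

theory Defs
  imports "HOL-Analysis.Analysis" "HOL-Computational_Algebra.Polynomial"
begin

definition pd_eta :: "(real \<Rightarrow> real \<Rightarrow> real) \<Rightarrow> real \<Rightarrow> real \<Rightarrow> real" where
  "pd_eta F = (\<lambda>\<eta> \<xi>. deriv (\<lambda>t. F t \<xi>) \<eta>)"

definition pd_xi :: "(real \<Rightarrow> real \<Rightarrow> real) \<Rightarrow> real \<Rightarrow> real \<Rightarrow> real" where
  "pd_xi F = (\<lambda>\<eta> \<xi>. deriv (\<lambda>t. F \<eta> t) \<xi>)"

fun iter_pd :: "bool list \<Rightarrow> (real \<Rightarrow> real \<Rightarrow> real) \<Rightarrow> real \<Rightarrow> real \<Rightarrow> real" where
  "iter_pd [] F = F"
| "iter_pd (b # ds) F = (if b then pd_eta else pd_xi) (iter_pd ds F)"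

definition smooth_on :: "(real \<times> real) set \<Rightarrow> (real \<Rightarrow> real \<Rightarrow> real) \<Rightarrow> bool" where
  "smooth_on U F \<longleftrightarrow>
     (\<forall>ds. continuous_on U (\<lambda>(\<eta>, \<xi>). iter_pd ds F \<eta> \<xi>) \<and>
       (\<forall>\<eta> \<xi>. (\<eta>, \<xi>) \<in> U \<longrightarrow>
          (\<lambda>t. iter_pd ds F t \<xi>) differentiable (at \<eta>) \<and>
          (\<lambda>t. iter_pd ds F \<eta> t) differentiable (at \<xi>)))"

text \<open>Bivariate polynomials of total degree at most m, represented by their
  coefficient functions c i j (coefficient of eta^i xi^j).\<close>
definition bipoly :: "nat \<Rightarrow> (nat \<Rightarrow> nat \<Rightarrow> real) set" where
  "bipoly m = {c. \<forall>i j. m < i + j \<longrightarrow> c i j = 0}"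

definition beval :: "nat \<Rightarrow> (nat \<Rightarrow> nat \<Rightarrow> real) \<Rightarrow> real \<Rightarrow> real \<Rightarrow> real" where
  "beval m c = (\<lambda>\<eta> \<xi>. \<Sum>i\<le>m. \<Sum>j\<le>m. c i j * \<eta> ^ i * \<xi> ^ j)"

definition Lop :: "(real \<Rightarrow> real \<Rightarrow> real) \<Rightarrow> (real \<Rightarrow> real \<Rightarrow> real) \<Rightarrow> (real \<Rightarrow> real \<Rightarrow> real)
     \<Rightarrow> (real \<Rightarrow> real \<Rightarrow> real) \<Rightarrow> real \<Rightarrow> real \<Rightarrow> real" where
  "Lop J0 J1 J2 u = (\<lambda>\<eta> \<xi>. pd_eta (pd_eta u) \<eta> \<xi> + J0 \<eta> \<xi> * pd_xi (pd_xi u) \<eta> \<xi>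
       + J1 \<eta> \<xi> * pd_eta u \<eta> \<xi> + J2 \<eta> \<xi> * pd_xi u \<eta> \<xi>)"

definition interface_conds ::
  "nat \<Rightarrow> real \<Rightarrow> real \<Rightarrow> (real \<Rightarrow> real \<Rightarrow> real) \<Rightarrow> (real \<Rightarrow> real \<Rightarrow> real)
   \<Rightarrow> (real \<Rightarrow> real \<Rightarrow> real) \<Rightarrow> real \<Rightarrow> real
   \<Rightarrow> (real \<Rightarrow> real \<Rightarrow> real) \<Rightarrow> (real \<Rightarrow> real \<Rightarrow> real) \<Rightarrow> bool" where
  "interface_conds m bm bp J0 J1 J2 \<xi>0 \<xi>1 um up \<longleftrightarrow>
     (\<forall>\<xi>\<in>{\<xi>0..\<xi>1}. up 0 \<xi> - um 0 \<xi> = 0) \<and>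
     (\<forall>\<xi>\<in>{\<xi>0..\<xi>1}. bp * pd_eta up 0 \<xi> - bm * pd_eta um 0 \<xi> = 0) \<and>
     (\<forall>j. j \<le> m - 2 \<and> 2 \<le> m \<longrightarrow>
        (\<forall>v :: real poly. degree v \<le> m - 2 - j \<longrightarrow>
           integral {\<xi>0..\<xi>1} (\<lambda>\<xi>. poly v \<xi> *
              (bp * (pd_eta ^^ j) (Lop J0 J1 J2 up) 0 \<xi>
               - bm * (pd_eta ^^ j) (Lop J0 J1 J2 um) 0 \<xi>)) = 0))"

end

theory Submission
  imports Defs
begin


definition okd :: "(real \<times> real) set \<Rightarrow> nat \<Rightarrow> (real \<Rightarrow> real \<Rightarrow> real) \<Rightarrow> bool" where
  "okd U k f \<longleftrightarrow> (\<forall>i\<le>k. continuous_on U (\<lambda>(\<eta>, \<xi>). (pd_eta ^^ i) f \<eta> \<xi>) \<and>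
       (\<forall>\<eta> \<xi>. (\<eta>, \<xi>) \<in> U \<longrightarrow> (\<lambda>t. (pd_eta ^^ i) f t \<xi>) differentiable (at \<eta>)))"

definition good :: "(real \<times> real) set \<Rightarrow> (real \<Rightarrow> real \<Rightarrow> real) \<Rightarrow> bool" where
  "good U f \<longleftrightarrow> (\<forall>k. okd U k f)"

definition padd :: "(real \<Rightarrow> real \<Rightarrow> real) \<Rightarrow> (real \<Rightarrow> real \<Rightarrow> real) \<Rightarrow> real \<Rightarrow> real \<Rightarrow> real" where
  "padd f g = (\<lambda>a b. f a b + g a b)"

lemma all_le_Suc: "(\<forall>i\<le>Suc k. P i) \<longleftrightarrow> P 0 \<and> (\<forall>i\<le>k. P (Suc i))"
  by (metis Suc_le_mono le0 not0_implies_Suc)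

lemma funpow_Suc_pd: "(pd_eta ^^ Suc i) f = (pd_eta ^^ i) (pd_eta f)"
  by (simp only: funpow_Suc_right comp_apply)

lemma okd_Suc: "okd U (Suc k) f \<longleftrightarrow> okd U 0 f \<and> okd U k (pd_eta f)"
  unfolding okd_def all_le_Suc funpow_Suc_pd by simp

lemma open_slice: "open (U::(real \<times> real) set) \<Longrightarrow> open {t. (t, \<xi>) \<in> U}"
proof -
  assume "open U"
  have "{t. (t, \<xi>) \<in> U} = (\<lambda>t. (t, \<xi>)) -` U" by auto
  moreover have "open ((\<lambda>t::real. (t, \<xi>)) -` U)"
    by (rule continuous_open_vimage[OF \<open>open U\<close>]) (intro continuous_intros)
  ultimately show ?thesis by simp
qed

lemma pd_cong:
  assumes "open U" "\<And>a b. (a, b) \<in> U \<Longrightarrow> f a b = g a b" "(\<eta>, \<xi>) \<in> U"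
  shows "pd_eta f \<eta> \<xi> = pd_eta g \<eta> \<xi>"
  unfolding pd_eta_def
proof (rule deriv_cong_ev[OF _ refl])
  show "\<forall>\<^sub>F x in nhds \<eta>. f x \<xi> = g x \<xi>"
    unfolding eventually_nhds
    by (rule exI[of _ "{t. (t, \<xi>) \<in> U}"]) (use assms open_slice in auto)
qed

lemma iter_cong:
  assumes "open U" "\<And>a b. (a, b) \<in> U \<Longrightarrow> f a b = g a b" "(\<eta>, \<xi>) \<in> U"
  shows "(pd_eta ^^ i) f \<eta> \<xi> = (pd_eta ^^ i) g \<eta> \<xi>"
  using assms(3)
proof (induction i arbitrary: \<eta> \<xi>)
  case 0 then show ?case using assms by simp
next
  case (Suc i) then show ?case
    using pd_cong[OF assms(1), of "(pd_eta ^^ i) f" "(pd_eta ^^ i) g"] by simp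
qed

lemma diff_transform:
  fixes F G :: "real \<Rightarrow> real"
  assumes "F differentiable at \<eta>" "open S" "\<eta> \<in> S" "\<And>t. t \<in> S \<Longrightarrow> F t = G t"
  shows "G differentiable at \<eta>"
  using assms has_field_derivative_transform_within_open unfolding real_differentiable_def
  by metis

lemma DERIV_pd:
  "(\<lambda>t. f t \<xi>) differentiable at \<eta> \<Longrightarrow> ((\<lambda>t. f t \<xi>) has_real_derivative pd_eta f \<eta> \<xi>) (at \<eta>)"
  unfolding pd_eta_def using DERIV_deriv_iff_real_differentiable by blast

lemma pd_add_at:
  assumes "(\<lambda>t. f t \<xi>) differentiable at \<eta>" "(\<lambda>t. g t \<xi>) differentiable at \<eta>"
  shows "pd_eta (padd f g) \<eta> \<xi> = pd_eta f \<eta> \<xi> + pd_eta g \<eta> \<xi>"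
proof -
  have "((\<lambda>t. f t \<xi> + g t \<xi>) has_real_derivative pd_eta f \<eta> \<xi> + pd_eta g \<eta> \<xi>) (at \<eta>)"
    by (intro DERIV_add DERIV_pd assms)
  then show ?thesis unfolding pd_eta_def padd_def by (rule DERIV_imp_deriv)
qed

lemma pd_cmult_at:
  assumes "(\<lambda>t. f t \<xi>) differentiable at \<eta>"
  shows "pd_eta (\<lambda>a b. c * f a b) \<eta> \<xi> = c * pd_eta f \<eta> \<xi>"
proof -
  have "((\<lambda>t. c * f t \<xi>) has_real_derivative c * pd_eta f \<eta> \<xi>) (at \<eta>)"
    by (intro DERIV_cmult DERIV_pd assms)
  then show ?thesis unfolding pd_eta_def by (rule DERIV_imp_deriv)
qed

lemma iter_add:
  assumes "open U" "okd U k f" "okd U k g"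
  shows "i \<le> Suc k \<Longrightarrow> (\<eta>, \<xi>) \<in> U \<Longrightarrow>
     (pd_eta ^^ i) (padd f g) \<eta> \<xi> = (pd_eta ^^ i) f \<eta> \<xi> + (pd_eta ^^ i) g \<eta> \<xi>"
proof (induction i arbitrary: \<eta> \<xi>)
  case 0 then show ?case by (simp add: padd_def)
next
  case (Suc i)
  have "(pd_eta ^^ Suc i) (padd f g) \<eta> \<xi> = pd_eta ((pd_eta ^^ i) (padd f g)) \<eta> \<xi>" by simp
  also have "\<dots> = pd_eta (padd ((pd_eta ^^ i) f) ((pd_eta ^^ i) g)) \<eta> \<xi>"
    by (rule pd_cong[OF assms(1) _ Suc.prems(2)]) (use Suc in \<open>auto simp: padd_def\<close>)
  also have "\<dots> = (pd_eta ^^ Suc i) f \<eta> \<xi> + (pd_eta ^^ Suc i) g \<eta> \<xi>"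
    using Suc.prems assms(2,3) unfolding okd_def by (simp add: pd_add_at)
  finally show ?case .
qed

lemma iter_cmult:
  assumes "open U" "okd U k f"
  shows "i \<le> Suc k \<Longrightarrow> (\<eta>, \<xi>) \<in> U \<Longrightarrow>
     (pd_eta ^^ i) (\<lambda>a b. c * f a b) \<eta> \<xi> = c * (pd_eta ^^ i) f \<eta> \<xi>"
proof (induction i arbitrary: \<eta> \<xi>)
  case 0 then show ?case by simp
next
  case (Suc i)
  have "(pd_eta ^^ Suc i) (\<lambda>a b. c * f a b) \<eta> \<xi> = pd_eta ((pd_eta ^^ i) (\<lambda>a b. c * f a b)) \<eta> \<xi>" by simp
  also have "\<dots> = pd_eta (\<lambda>a b. c * (pd_eta ^^ i) f a b) \<eta> \<xi>"
    by (rule pd_cong[OF assms(1) _ Suc.prems(2)]) (use Suc in auto)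
  also have "\<dots> = c * (pd_eta ^^ Suc i) f \<eta> \<xi>"
    using Suc.prems assms(2) unfolding okd_def by (simp add: pd_cmult_at)
  finally show ?case .
qed

lemma cont_case_add:
  fixes F G :: "real \<Rightarrow> real \<Rightarrow> real" and U :: "(real \<times> real) set"
  shows "continuous_on U (\<lambda>(a, b). F a b) \<Longrightarrow> continuous_on U (\<lambda>(a, b). G a b) \<Longrightarrow>
   continuous_on U (\<lambda>(a, b). F a b + G a b)"
proof -
  assume "continuous_on U (\<lambda>(a, b). F a b)" "continuous_on U (\<lambda>(a, b). G a b)"
  then have "continuous_on U (\<lambda>p. (\<lambda>(a, b). F a b) p + (\<lambda>(a, b). G a b) p)"
    by (intro continuous_on_add)
  then show ?thesis by (simp add: case_prod_beta')
qed

lemma cont_case_cmult: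
  fixes F :: "real \<Rightarrow> real \<Rightarrow> real" and U :: "(real \<times> real) set"
  shows "continuous_on U (\<lambda>(a, b). F a b) \<Longrightarrow> continuous_on U (\<lambda>(a, b). c * F a b)"
proof -
  assume "continuous_on U (\<lambda>(a, b). F a b)"
  then have "continuous_on U (\<lambda>p. c * (\<lambda>(a, b). F a b) p)"
    by (intro continuous_on_mult continuous_on_const)
  then show ?thesis by (simp add: case_prod_beta')
qed

lemma okd_add:
  assumes "open U" "okd U k f" "okd U k g"
  shows "okd U k (padd f g)"
  unfolding okd_def
proof (intro allI impI conjI)
  fix i assume i: "i \<le> k"
  have eq: "\<And>a b. (a, b) \<in> U \<Longrightarrow> (pd_eta ^^ i) (padd f g) a b = (pd_eta ^^ i) f a b + (pd_eta ^^ i) g a b"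
    using iter_add[OF assms] i by simp
  have "continuous_on U (\<lambda>(a, b). (pd_eta ^^ i) f a b + (pd_eta ^^ i) g a b)"
    using assms(2,3) i unfolding okd_def by (intro cont_case_add) auto
  then show "continuous_on U (\<lambda>(a, b). (pd_eta ^^ i) (padd f g) a b)"
    by (rule continuous_on_eq) (use eq in auto)
  fix \<eta> \<xi> assume p: "(\<eta>, \<xi>) \<in> U"
  have "(\<lambda>t. (pd_eta ^^ i) f t \<xi> + (pd_eta ^^ i) g t \<xi>) differentiable at \<eta>"
    using assms(2,3) i p unfolding okd_def by (intro differentiable_add) auto
  then show "(\<lambda>t. (pd_eta ^^ i) (padd f g) t \<xi>) differentiable at \<eta>"
    by (rule diff_transform[OF _ open_slice[OF assms(1)]]) (use p eq in auto)
qed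

lemma okd_cmult:
  assumes "open U" "okd U k f"
  shows "okd U k (\<lambda>a b. c * f a b)"
  unfolding okd_def
proof (intro allI impI conjI)
  fix i assume i: "i \<le> k"
  have eq: "\<And>a b. (a, b) \<in> U \<Longrightarrow> (pd_eta ^^ i) (\<lambda>a b. c * f a b) a b = c * (pd_eta ^^ i) f a b"
    using iter_cmult[OF assms] i by simp
  have "continuous_on U (\<lambda>(a, b). c * (pd_eta ^^ i) f a b)"
    using assms(2) i unfolding okd_def by (intro cont_case_cmult) auto
  then show "continuous_on U (\<lambda>(a, b). (pd_eta ^^ i) (\<lambda>a b. c * f a b) a b)"
    by (rule continuous_on_eq) (use eq in auto)
  fix \<eta> \<xi> assume p: "(\<eta>, \<xi>) \<in> U"
  have "(\<lambda>t. c * (pd_eta ^^ i) f t \<xi>) differentiable at \<eta>"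
    using assms(2) i p unfolding okd_def by (intro differentiable_mult differentiable_const) auto
  then show "(\<lambda>t. (pd_eta ^^ i) (\<lambda>a b. c * f a b) t \<xi>) differentiable at \<eta>"
    by (rule diff_transform[OF _ open_slice[OF assms(1)]]) (use p eq in auto)
qed

lemma okd_cong:
  assumes "open U" "\<And>a b. (a, b) \<in> U \<Longrightarrow> f a b = g a b" "okd U k f"
  shows "okd U k g"
  unfolding okd_def
proof (intro allI impI conjI)
  fix i assume i: "i \<le> k"
  have eq: "\<And>a b. (a, b) \<in> U \<Longrightarrow> (pd_eta ^^ i) f a b = (pd_eta ^^ i) g a b"
    by (rule iter_cong[OF assms(1)]) (use assms(2) in auto)
  show "continuous_on U (\<lambda>(a, b). (pd_eta ^^ i) g a b)"
    by (rule continuous_on_eq[of _ "\<lambda>(a, b). (pd_eta ^^ i) f a b"]) (use eq assms(3) i in \<open>auto simp: okd_def\<close>)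
  fix \<eta> \<xi> assume p: "(\<eta>, \<xi>) \<in> U"
  show "(\<lambda>t. (pd_eta ^^ i) g t \<xi>) differentiable at \<eta>"
    by (rule diff_transform[OF _ open_slice[OF assms(1)], of "\<lambda>t. (pd_eta ^^ i) f t \<xi>"])
       (use p eq assms(3) i in \<open>auto simp: okd_def\<close>)
qed

lemma pd_zero: "pd_eta (\<lambda>a b. 0) = (\<lambda>a b. 0)"
  unfolding pd_eta_def by simp

lemma iter_zero: "(pd_eta ^^ i) (\<lambda>a b. 0) = (\<lambda>a b. 0)"
  by (induction i) (simp_all add: pd_zero)

lemma okd_zero: "okd U k (\<lambda>a b. 0)"
  unfolding okd_def iter_zero by simp

lemma okd_sum:
  assumes "open U" "finite A"
  shows "(\<forall>p\<in>A. okd U k (g p)) \<Longrightarrow> okd U k (\<lambda>a b. \<Sum>p\<in>A. g p a b) \<and>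
     (\<forall>i\<le>k. \<forall>\<eta> \<xi>. (\<eta>, \<xi>) \<in> U \<longrightarrow> (pd_eta ^^ i) (\<lambda>a b. \<Sum>p\<in>A. g p a b) \<eta> \<xi> = (\<Sum>p\<in>A. (pd_eta ^^ i) (g p) \<eta> \<xi>))"
  using assms(2)
proof (induction A rule: finite_induct)
  case empty then show ?case by (simp add: okd_zero iter_zero)
next
  case (insert x F)
  have e: "(\<lambda>a b. \<Sum>p\<in>insert x F. g p a b) = padd (g x) (\<lambda>a b. \<Sum>p\<in>F. g p a b)"
    using insert.hyps by (simp add: padd_def)
  have o1: "okd U k (g x)" and o2: "okd U k (\<lambda>a b. \<Sum>p\<in>F. g p a b)"
   and v: "\<forall>i\<le>k. \<forall>\<eta> \<xi>. (\<eta>, \<xi>) \<in> U \<longrightarrow> (pd_eta ^^ i) (\<lambda>a b. \<Sum>p\<in>F. g p a b) \<eta> \<xi> = (\<Sum>p\<in>F. (pd_eta ^^ i) (g p) \<eta> \<xi>)"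
    using insert by auto
  show ?case unfolding e
    using okd_add[OF assms(1) o1 o2] iter_add[OF assms(1) o1 o2] v insert.hyps by auto
qed



definition Tm :: "nat \<Rightarrow> (real \<Rightarrow> real) \<Rightarrow> (real \<Rightarrow> real \<Rightarrow> real) \<Rightarrow> real \<Rightarrow> real \<Rightarrow> real" where
  "Tm n g h = (\<lambda>a b. a ^ n * g b * h a b)"

lemma DERIV_T:
  assumes "(\<lambda>t. h t \<xi>) differentiable at \<eta>"
  shows "((\<lambda>t. Tm n g h t \<xi>) has_real_derivative
     Tm (n - 1) (\<lambda>b. real n * g b) h \<eta> \<xi> + Tm n g (pd_eta h) \<eta> \<xi>) (at \<eta>)"
proof -
  have d: "((\<lambda>t. h t \<xi>) has_real_derivative pd_eta h \<eta> \<xi>) (at \<eta>)" by (rule DERIV_pd[of h \<xi> \<eta>, OF assms])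
  have "((\<lambda>t. t ^ n * g \<xi> * h t \<xi>) has_real_derivative
      (real n * \<eta> ^ (n - 1)) * g \<xi> * h \<eta> \<xi> + \<eta> ^ n * g \<xi> * pd_eta h \<eta> \<xi>) (at \<eta>)"
    by (auto intro!: derivative_eq_intros d)
  then show ?thesis unfolding Tm_def by (simp add: algebra_simps)
qed

lemma pd_T:
  assumes "(\<lambda>t. h t \<xi>) differentiable at \<eta>"
  shows "pd_eta (Tm n g h) \<eta> \<xi> = padd (Tm (n - 1) (\<lambda>b. real n * g b) h) (Tm n g (pd_eta h)) \<eta> \<xi>"
  unfolding padd_def using DERIV_imp_deriv[OF DERIV_T[of h \<xi> \<eta> n g, OF assms]] by (simp add: pd_eta_def)

lemma okd0_T:
  assumes "continuous_on UNIV g" "okd U 0 h"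
  shows "okd U 0 (Tm n g h)"
  unfolding okd_def
proof (intro allI impI conjI)
  fix i :: nat assume "i \<le> 0" then have i: "i = 0" by simp
  have ch: "continuous_on U (\<lambda>(a, b). h a b)" using assms(2) unfolding okd_def by auto
  have cg: "continuous_on U (\<lambda>p. g (snd p))"
    by (rule continuous_on_compose2[OF assms(1)]) (auto intro: continuous_intros)
  have "continuous_on U (\<lambda>p. fst p ^ n * g (snd p) * (\<lambda>(a, b). h a b) p)"
    by (intro continuous_intros cg ch)
  then show "continuous_on U (\<lambda>(a, b). (pd_eta ^^ i) (Tm n g h) a b)"
    unfolding i Tm_def by (simp add: case_prod_beta')
  fix \<eta> \<xi> assume p: "(\<eta>, \<xi>) \<in> U"
  have "(\<lambda>t. h t \<xi>) differentiable at \<eta>" using assms(2) p unfolding okd_def by auto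
  then show "(\<lambda>t. (pd_eta ^^ i) (Tm n g h) t \<xi>) differentiable at \<eta>"
    unfolding i using DERIV_T real_differentiable_def by (simp) blast
qed

lemma good_pd: "good U h \<Longrightarrow> good U (pd_eta h)"
  unfolding good_def
proof
  fix k assume "\<forall>k. okd U k h"
  then have "okd U (Suc k) h" by blast
  then show "okd U k (pd_eta h)" by (simp only: okd_Suc)
qed

lemma good_okd: "good U h \<Longrightarrow> okd U k h"
  unfolding good_def by blast

lemma okd_diff0: "okd U k h \<Longrightarrow> (a, b) \<in> U \<Longrightarrow> (\<lambda>t. h t b) differentiable at a"
  unfolding okd_def by (metis funpow_0 le0)

lemma good_diff: "good U h \<Longrightarrow> (a, b) \<in> U \<Longrightarrow> (\<lambda>t. h t b) differentiable at a"
  using good_okd okd_diff0 by blast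

lemma okd_T:
  assumes "open U" "continuous_on UNIV g" "good U h"
  shows "okd U k (Tm n g h)"
  using assms(2,3)
proof (induction k arbitrary: n g h)
  case 0 then show ?case using okd0_T[of g U h n] good_okd[of U h 0] by blast
next
  case (Suc k)
  have c2: "continuous_on UNIV (\<lambda>b. real n * g b)"
    by (rule continuous_on_mult[OF continuous_on_const Suc.prems(1)])
  have o1: "okd U k (Tm (n - 1) (\<lambda>b. real n * g b) h)" using Suc.IH[OF c2 Suc.prems(2)] .
  have o2: "okd U k (Tm n g (pd_eta h))" using Suc.IH[OF Suc.prems(1) good_pd[OF Suc.prems(2)]] .
  have "okd U k (pd_eta (Tm n g h))"
  proof (rule okd_cong[OF assms(1) _ okd_add[OF assms(1) o1 o2]])
    fix a b assume "(a, b) \<in> U"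
    then have "(\<lambda>t. h t b) differentiable at a" by (rule good_diff[OF Suc.prems(2)])
    then show "padd (Tm (n - 1) (\<lambda>b. real n * g b) h) (Tm n g (pd_eta h)) a b = pd_eta (Tm n g h) a b"
      by (rule pd_T[of h b a, symmetric])
  qed
  moreover have "okd U 0 (Tm n g h)" using okd0_T[of g U h n] Suc.prems good_okd[of U h 0] by blast
  ultimately show ?case by (simp only: okd_Suc)
qed

lemma good_T: "open U \<Longrightarrow> continuous_on UNIV g \<Longrightarrow> good U h \<Longrightarrow> good U (Tm n g h)"
  unfolding good_def by (intro allI okd_T[of U g h]) (simp_all add: good_def)

lemma good_add: "open U \<Longrightarrow> good U f \<Longrightarrow> good U g \<Longrightarrow> good U (padd f g)"
  unfolding good_def by (intro allI okd_add[of U _ f g]) (simp_all add: good_def)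

lemma Tvan:
  assumes "open U" "continuous_on UNIV g" "good U h" "(0, \<xi>) \<in> U"
  shows "k \<le> n \<Longrightarrow> (pd_eta ^^ k) (Tm n g h) 0 \<xi> = (if k = n then fact n * g \<xi> * h 0 \<xi> else 0)"
  using assms(2,3)
proof (induction k arbitrary: n g h)
  case 0 then show ?case by (simp add: Tm_def)
next
  case (Suc k)
  have c2: "continuous_on UNIV (\<lambda>b. real n * g b)"
    by (rule continuous_on_mult[OF continuous_on_const Suc.prems(2)])
  have o1: "okd U k (Tm (n - 1) (\<lambda>b. real n * g b) h)" by (rule okd_T[OF assms(1) c2 Suc.prems(3)])
  have o2: "okd U k (Tm n g (pd_eta h))" by (rule okd_T[OF assms(1) Suc.prems(2) good_pd[OF Suc.prems(3)]])
  have "(pd_eta ^^ Suc k) (Tm n g h) 0 \<xi> = (pd_eta ^^ k) (pd_eta (Tm n g h)) 0 \<xi>"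
    by (simp only: funpow_Suc_pd)
  also have "\<dots> = (pd_eta ^^ k) (padd (Tm (n - 1) (\<lambda>b. real n * g b) h) (Tm n g (pd_eta h))) 0 \<xi>"
  proof (rule iter_cong[OF assms(1) _ assms(4)])
    fix a b assume "(a, b) \<in> U"
    then have "(\<lambda>t. h t b) differentiable at a" by (rule good_diff[OF Suc.prems(3)])
    then show "pd_eta (Tm n g h) a b = padd (Tm (n - 1) (\<lambda>b. real n * g b) h) (Tm n g (pd_eta h)) a b"
      by (rule pd_T[of h b a])
  qed
  also have "\<dots> = (pd_eta ^^ k) (Tm (n - 1) (\<lambda>b. real n * g b) h) 0 \<xi> + (pd_eta ^^ k) (Tm n g (pd_eta h)) 0 \<xi>"
    by (rule iter_add[OF assms(1) o1 o2 _ assms(4)]) simp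
  also have "\<dots> = (if k = n - 1 then fact (n - 1) * (real n * g \<xi>) * h 0 \<xi> else 0) + 0"
  proof -
    have "(pd_eta ^^ k) (Tm (n - 1) (\<lambda>b. real n * g b) h) 0 \<xi> = (if k = n - 1 then fact (n - 1) * (real n * g \<xi>) * h 0 \<xi> else 0)"
      by (rule Suc.IH[OF _ c2 Suc.prems(3)]) (use Suc.prems(1) in simp)
    moreover have "(pd_eta ^^ k) (Tm n g (pd_eta h)) 0 \<xi> = 0"
      using Suc.IH[OF _ Suc.prems(2) good_pd[OF Suc.prems(3)], of n] Suc.prems(1) by simp
    ultimately show ?thesis by simp
  qed
  also have "\<dots> = (if Suc k = n then fact n * g \<xi> * h 0 \<xi> else 0)"
    using Suc.prems(1) by (auto simp: fact_reduce[of n])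
  finally show ?case .
qed

lemma iter_pd_replicate: "iter_pd (replicate i True) J = (pd_eta ^^ i) J"
  by (induction i) auto

lemma good_J: "smooth_on U J \<Longrightarrow> good U J"
  unfolding good_def okd_def smooth_on_def
  by (metis iter_pd_replicate)

lemma iter_one: "(pd_eta ^^ Suc i) (\<lambda>a b. 1) = (\<lambda>a b. 0)"
proof -
  have "pd_eta (\<lambda>a b. 1) = (\<lambda>a b. 0)" unfolding pd_eta_def by simp
  then show ?thesis by (simp only: funpow_Suc_pd iter_zero)
qed

lemma good_one: "good U (\<lambda>a b. 1)"
  unfolding good_def okd_def
proof (intro allI impI conjI)
  fix k i :: nat and \<eta> \<xi> :: real
  show "continuous_on U (\<lambda>(a, b). (pd_eta ^^ i) (\<lambda>a b. 1) a b)"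
    by (cases i) (simp_all only: iter_one funpow_0 case_prod_beta' continuous_on_const)
  show "(\<lambda>t. (pd_eta ^^ i) (\<lambda>a b. 1) t \<xi>) differentiable at \<eta>"
    by (cases i) (simp_all only: iter_one funpow_0 differentiable_const)
qed



definition LM :: "(real \<Rightarrow> real \<Rightarrow> real) \<Rightarrow> (real \<Rightarrow> real \<Rightarrow> real) \<Rightarrow> (real \<Rightarrow> real \<Rightarrow> real)
   \<Rightarrow> nat \<Rightarrow> nat \<Rightarrow> real \<Rightarrow> real \<Rightarrow> real" where
  "LM J0 J1 J2 k l = padd (padd (padd
      (Tm (k - 1 - 1) (\<lambda>b. real k * real (k - 1) * b ^ l) (\<lambda>a b. 1))
      (Tm k (\<lambda>b. real l * real (l - 1) * b ^ (l - 1 - 1)) J0))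
      (Tm (k - 1) (\<lambda>b. real k * b ^ l) J1))
      (Tm k (\<lambda>b. real l * b ^ (l - 1)) J2)"

lemma cont_mono: "continuous_on UNIV (\<lambda>b::real. c * b ^ l)"
  by (intro continuous_on_mult continuous_on_const continuous_on_power continuous_on_id)

lemma good_LM:
  assumes "open U" "good U J0" "good U J1" "good U J2"
  shows "good U (LM J0 J1 J2 k l)"
  unfolding LM_def
  by (intro good_add good_T assms cont_mono good_one)

lemma E_eval:
  assumes "open U" "good U J0" "good U J1" "good U J2" "(0, \<xi>) \<in> U"
  shows "(pd_eta ^^ j) (LM J0 J1 J2 k l) 0 \<xi> =
    (pd_eta ^^ j) (Tm (k - 1 - 1) (\<lambda>b. real k * real (k - 1) * b ^ l) (\<lambda>a b. 1)) 0 \<xi>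
  + (pd_eta ^^ j) (Tm k (\<lambda>b. real l * real (l - 1) * b ^ (l - 1 - 1)) J0) 0 \<xi>
  + (pd_eta ^^ j) (Tm (k - 1) (\<lambda>b. real k * b ^ l) J1) 0 \<xi>
  + (pd_eta ^^ j) (Tm k (\<lambda>b. real l * b ^ (l - 1)) J2) 0 \<xi>"
proof -
  have g1: "good U (Tm (k - 1 - 1) (\<lambda>b. real k * real (k - 1) * b ^ l) (\<lambda>a b. 1))"
    by (intro good_T assms cont_mono good_one)
  have g2: "good U (Tm k (\<lambda>b. real l * real (l - 1) * b ^ (l - 1 - 1)) J0)"
    by (intro good_T assms cont_mono)
  have g3: "good U (Tm (k - 1) (\<lambda>b. real k * b ^ l) J1)"
    by (intro good_T assms cont_mono)
  have g4: "good U (Tm k (\<lambda>b. real l * b ^ (l - 1)) J2)"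
    by (intro good_T assms cont_mono)
  have g12: "good U (padd (Tm (k - 1 - 1) (\<lambda>b. real k * real (k - 1) * b ^ l) (\<lambda>a b. 1))
      (Tm k (\<lambda>b. real l * real (l - 1) * b ^ (l - 1 - 1)) J0))"
    by (intro good_add g1 g2 assms)
  have g123: "good U (padd (padd (Tm (k - 1 - 1) (\<lambda>b. real k * real (k - 1) * b ^ l) (\<lambda>a b. 1))
      (Tm k (\<lambda>b. real l * real (l - 1) * b ^ (l - 1 - 1)) J0)) (Tm (k - 1) (\<lambda>b. real k * b ^ l) J1))"
    by (intro good_add g12 g3 assms)
  show ?thesis unfolding LM_def
    apply (subst iter_add[OF assms(1) good_okd[OF g123, of j] good_okd[OF g4, of j] _ assms(5)], simp)
    apply (subst iter_add[OF assms(1) good_okd[OF g12, of j] good_okd[OF g3, of j] _ assms(5)], simp)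
    apply (subst iter_add[OF assms(1) good_okd[OF g1, of j] good_okd[OF g2, of j] _ assms(5)], simp)
    by simp
qed

lemma E_high:
  assumes "open U" "good U J0" "good U J1" "good U J2" "(0, \<xi>) \<in> U" "j + 2 < k"
  shows "(pd_eta ^^ j) (LM J0 J1 J2 k l) 0 \<xi> = 0"
  unfolding E_eval[OF assms(1-5)]
  using assms(6)
  apply (simp add: Tvan[OF assms(1) cont_mono good_one assms(5)] Tvan[OF assms(1) cont_mono assms(2) assms(5)]
      Tvan[OF assms(1) cont_mono assms(3) assms(5)] Tvan[OF assms(1) cont_mono assms(4) assms(5)])
  by arith

lemma E_top:
  assumes "open U" "good U J0" "good U J1" "good U J2" "(0, \<xi>) \<in> U"
  shows "(pd_eta ^^ j) (LM J0 J1 J2 (j + 2) l) 0 \<xi> = fact j * real (j + 2) * real (j + 1) * \<xi> ^ l"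
  unfolding E_eval[OF assms(1-5)]
  by (simp add: Tvan[OF assms(1) cont_mono good_one assms(5)] Tvan[OF assms(1) cont_mono assms(2) assms(5)]
      Tvan[OF assms(1) cont_mono assms(3) assms(5)] Tvan[OF assms(1) cont_mono assms(4) assms(5)])

lemma E_cont:
  assumes "open U" "good U J0" "good U J1" "good U J2" "\<And>\<xi>. \<xi> \<in> S \<Longrightarrow> (0, \<xi>) \<in> U"
  shows "continuous_on S (\<lambda>\<xi>. (pd_eta ^^ j) (LM J0 J1 J2 k l) 0 \<xi>)"
proof -
  have "continuous_on U (\<lambda>(a, b). (pd_eta ^^ j) (LM J0 J1 J2 k l) a b)"
    using good_okd[OF good_LM[OF assms(1-4), of k l], of j] unfolding okd_def by simp
  then have "continuous_on S (\<lambda>\<xi>. (\<lambda>(a, b). (pd_eta ^^ j) (LM J0 J1 J2 k l) a b) (0, \<xi>))"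
    by (rule continuous_on_compose2) (use assms(5) in \<open>auto intro!: continuous_intros\<close>)
  then show ?thesis by simp
qed



lemma D_eta:
  "pd_eta (\<lambda>a b. \<Sum>k\<le>m. \<Sum>l\<le>m. C k l b * a ^ e k l) =
   (\<lambda>a b. \<Sum>k\<le>m. \<Sum>l\<le>m. C k l b * (real (e k l) * a ^ (e k l - 1)))"
  unfolding pd_eta_def
  by (intro ext DERIV_imp_deriv DERIV_sum DERIV_cmult) (auto intro!: derivative_eq_intros)

lemma D_xi:
  "pd_xi (\<lambda>a b. \<Sum>k\<le>m. \<Sum>l\<le>m. C k l a * b ^ e k l) =
   (\<lambda>a b. \<Sum>k\<le>m. \<Sum>l\<le>m. C k l a * (real (e k l) * b ^ (e k l - 1)))"
  unfolding pd_xi_def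
  by (intro ext DERIV_imp_deriv DERIV_sum DERIV_cmult) (auto intro!: derivative_eq_intros)

lemma beval_eta_form: "beval m c = (\<lambda>a b. \<Sum>k\<le>m. \<Sum>l\<le>m. (c k l * b ^ l) * a ^ k)"
  unfolding beval_def by (simp add: mult_ac)

lemma beval_xi_form: "beval m c = (\<lambda>a b. \<Sum>k\<le>m. \<Sum>l\<le>m. (c k l * a ^ k) * b ^ l)"
  unfolding beval_def by (simp add: mult_ac)

lemma pd_eta_beval: "pd_eta (beval m c) = (\<lambda>a b. \<Sum>k\<le>m. \<Sum>l\<le>m. (c k l * b ^ l * real k) * a ^ (k - 1))"
  unfolding beval_eta_form D_eta[where C="\<lambda>k l b. c k l * b ^ l" and e="\<lambda>k l. k"]
  by (simp add: mult_ac)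

lemma pd_eta2_beval: "pd_eta (pd_eta (beval m c)) =
   (\<lambda>a b. \<Sum>k\<le>m. \<Sum>l\<le>m. (c k l * b ^ l * real k) * (real (k - 1) * a ^ (k - 1 - 1)))"
  unfolding pd_eta_beval D_eta[where C="\<lambda>k l b. c k l * b ^ l * real k" and e="\<lambda>k l. k - 1"] ..

lemma pd_xi_beval: "pd_xi (beval m c) = (\<lambda>a b. \<Sum>k\<le>m. \<Sum>l\<le>m. (c k l * a ^ k * real l) * b ^ (l - 1))"
  unfolding beval_xi_form D_xi[where C="\<lambda>k l a. c k l * a ^ k" and e="\<lambda>k l. l"]
  by (simp add: mult_ac)

lemma pd_xi2_beval: "pd_xi (pd_xi (beval m c)) =
   (\<lambda>a b. \<Sum>k\<le>m. \<Sum>l\<le>m. (c k l * a ^ k * real l) * (real (l - 1) * b ^ (l - 1 - 1)))"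
  unfolding pd_xi_beval D_xi[where C="\<lambda>k l a. c k l * a ^ k * real l" and e="\<lambda>k l. l - 1"] ..

lemma Lop_beval:
  "Lop J0 J1 J2 (beval m c) = (\<lambda>a b. \<Sum>k\<le>m. \<Sum>l\<le>m. c k l * LM J0 J1 J2 k l a b)"
  unfolding Lop_def pd_eta2_beval pd_xi2_beval
  unfolding pd_eta_beval pd_xi_beval LM_def padd_def Tm_def
  by (simp add: distrib_left sum.distrib sum_distrib_left mult_ac)

lemma beval_row0: "beval m c 0 \<xi> = (\<Sum>l\<le>m. c 0 l * \<xi> ^ l)"
proof -
  have "beval m c 0 \<xi> = (\<Sum>k\<le>m. if k = 0 then (\<Sum>l\<le>m. c 0 l * \<xi> ^ l) else 0)"
    unfolding beval_def by (rule sum.cong) (auto simp: zero_power)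
  then show ?thesis by simp
qed

lemma beval_row1: "1 \<le> m \<Longrightarrow> pd_eta (beval m c) 0 \<xi> = (\<Sum>l\<le>m. c 1 l * \<xi> ^ l)"
proof -
  assume m: "1 \<le> m"
  have "pd_eta (beval m c) 0 \<xi> = (\<Sum>k\<le>m. if k = 1 then (\<Sum>l\<le>m. c 1 l * \<xi> ^ l) else 0)"
    unfolding pd_eta_beval
  proof (rule sum.cong[OF refl])
    fix k assume "k \<in> {..m}"
    show "(\<Sum>l\<le>m. c k l * \<xi> ^ l * real k * 0 ^ (k - 1)) = (if k = 1 then \<Sum>l\<le>m. c 1 l * \<xi> ^ l else 0)"
      by (cases "k = 0"; cases "k = 1") (auto simp: zero_power)
  qed
  then show ?thesis using m by simp
qed

lemma F_rep:
  assumes "open U" "good U J0" "good U J1" "good U J2" "(0, \<xi>) \<in> U"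
  shows "(pd_eta ^^ j) (Lop J0 J1 J2 (beval m c)) 0 \<xi> =
    (\<Sum>k\<le>m. \<Sum>l\<le>m. c k l * (pd_eta ^^ j) (LM J0 J1 J2 k l) 0 \<xi>)"
proof -
  have inner: "okd U j (\<lambda>a b. \<Sum>l\<le>m. c k l * LM J0 J1 J2 k l a b) \<and>
     (\<forall>i\<le>j. \<forall>\<eta> \<xi>. (\<eta>, \<xi>) \<in> U \<longrightarrow> (pd_eta ^^ i) (\<lambda>a b. \<Sum>l\<le>m. c k l * LM J0 J1 J2 k l a b) \<eta> \<xi>
        = (\<Sum>l\<le>m. (pd_eta ^^ i) (\<lambda>a b. c k l * LM J0 J1 J2 k l a b) \<eta> \<xi>))" for k
    by (rule okd_sum[OF assms(1)]) (auto intro!: okd_cmult assms(1) good_okd[OF good_LM[OF assms(1-4)]])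
  have outer: "okd U j (\<lambda>a b. \<Sum>k\<le>m. \<Sum>l\<le>m. c k l * LM J0 J1 J2 k l a b) \<and>
     (\<forall>i\<le>j. \<forall>\<eta> \<xi>. (\<eta>, \<xi>) \<in> U \<longrightarrow> (pd_eta ^^ i) (\<lambda>a b. \<Sum>k\<le>m. \<Sum>l\<le>m. c k l * LM J0 J1 J2 k l a b) \<eta> \<xi>
        = (\<Sum>k\<le>m. (pd_eta ^^ i) (\<lambda>a b. \<Sum>l\<le>m. c k l * LM J0 J1 J2 k l a b) \<eta> \<xi>))"
    by (rule okd_sum[OF assms(1)]) (use inner in auto)
  have cm: "(pd_eta ^^ j) (\<lambda>a b. c k l * LM J0 J1 J2 k l a b) 0 \<xi> = c k l * (pd_eta ^^ j) (LM J0 J1 J2 k l) 0 \<xi>" for k l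
    using iter_cmult[OF assms(1) good_okd[OF good_LM[OF assms(1-4), of k l], of j], of j] assms(5) by simp
  show ?thesis unfolding Lop_beval using outer inner assms(5) cm by simp
qed



lemma Z_coeffs:
  fixes d :: "nat \<Rightarrow> real"
  assumes "a < b" "\<And>x. x \<in> {a..b} \<Longrightarrow> (\<Sum>l\<le>m. d l * x ^ l) = 0" "l \<le> m"
  shows "d l = 0"
proof (rule ccontr)
  assume "d l \<noteq> 0"
  then have "finite {x. (\<Sum>i\<le>m. d i * x ^ i) = 0}" using polyfun_finite_roots assms(3) by blast
  moreover have "{a..b} \<subseteq> {x. (\<Sum>i\<le>m. d i * x ^ i) = 0}" using assms(2) by auto
  ultimately have "finite {a..b}" by (rule finite_subset[rotated])
  then show False using infinite_Icc[OF assms(1)] by blast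
qed

lemma poly_zero_on:
  fixes q :: "real poly"
  assumes "a < b" "\<And>x. x \<in> {a..b} \<Longrightarrow> poly q x = 0"
  shows "q = 0"
proof (rule ccontr)
  assume "q \<noteq> 0"
  then have "finite {x. poly q x = 0}" by (rule poly_roots_finite)
  moreover have "{a..b} \<subseteq> {x. poly q x = 0}" using assms(2) by auto
  ultimately have "finite {a..b}" by (rule finite_subset[rotated])
  then show False using infinite_Icc[OF assms(1)] by blast
qed

lemma sq_int:
  fixes f :: "real \<Rightarrow> real"
  assumes "a < b" "continuous_on {a..b} f" "integral {a..b} (\<lambda>x. f x * f x) = 0" "x \<in> {a..b}"
  shows "f x = 0"
proof -
  have c: "continuous_on (cbox a b) (\<lambda>x. f x * f x)" using assms(2) by (auto intro: continuous_intros)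
  have hi: "((\<lambda>x. f x * f x) has_integral 0) (cbox a b)"
    using integrable_continuous_interval[OF c[unfolded box_real]] assms(3) by (metis box_real(2) integrable_integral)
  have "f x * f x = 0"
    by (rule has_integral_0_cbox_imp_0[OF c _ hi]) (use assms(1,4) in auto)
  then show ?thesis by simp
qed

lemma int_lin4:
  fixes f1 f2 f3 f4 :: "real \<Rightarrow> real"
  assumes "continuous_on {a..b} f1" "continuous_on {a..b} f2" "continuous_on {a..b} f3" "continuous_on {a..b} f4"
  shows "integral {a..b} (\<lambda>x. f1 x - c * f2 x + d * f3 x - e * f4 x) =
     integral {a..b} f1 - c * integral {a..b} f2 + d * integral {a..b} f3 - e * integral {a..b} f4"
proof -
  have "((\<lambda>x. f1 x - c * f2 x + d * f3 x - e * f4 x) has_integral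
     (integral {a..b} f1 - c * integral {a..b} f2 + d * integral {a..b} f3 - e * integral {a..b} f4)) {a..b}"
    by (intro has_integral_diff has_integral_add has_integral_mult_right integrable_integral
        integrable_continuous_interval assms)
  then show ?thesis by (rule integral_unique)
qed

lemma int_lin2:
  fixes f1 f2 :: "real \<Rightarrow> real"
  assumes "continuous_on {a..b} f1" "continuous_on {a..b} f2"
  shows "integral {a..b} (\<lambda>x. f1 x - f2 x) = integral {a..b} f1 - integral {a..b} f2"
  by (intro Henstock_Kurzweil_Integration.integral_diff integrable_continuous_interval assms)

lemma int_cmul: "integral S (\<lambda>x. c * f x) = (c::real) * integral S f"
  using integral_cmul[of S c f] by simp

lemma proj_ex:
  fixes a b :: real
  assumes ab: "a < b"
  shows "\<forall>G :: real \<Rightarrow> real. continuous_on {a..b} G \<longrightarrow> (\<exists>r. (\<forall>i\<ge>n. coeff r i = 0) \<and>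
     (\<forall>v. (\<forall>i\<ge>n. coeff v i = 0) \<longrightarrow> integral {a..b} (\<lambda>x. poly v x * (G x - poly r x)) = 0))"
proof (induction n)
  case 0
  show ?case
  proof (intro allI impI exI[of _ 0] conjI)
    fix G :: "real \<Rightarrow> real" and v :: "real poly" assume "\<forall>i\<ge>0. coeff v i = 0"
    then have "v = 0" by (intro poly_eqI) simp
    then show "integral {a..b} (\<lambda>x. poly v x * (G x - poly 0 x)) = 0" by simp
  qed simp
next
  case (Suc n)
  show ?case
  proof (intro allI impI)
    fix G :: "real \<Rightarrow> real" assume cG: "continuous_on {a..b} G"
    obtain r where r0: "\<forall>i\<ge>n. coeff r i = 0"
      and r: "\<And>v. \<forall>i\<ge>n. coeff v i = 0 \<Longrightarrow> integral {a..b} (\<lambda>x. poly v x * (G x - poly r x)) = 0"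
      using Suc.IH cG by blast
    have cpow: "continuous_on {a..b} (\<lambda>x::real. x ^ n)" by (intro continuous_intros)
    obtain rn where rn0: "\<forall>i\<ge>n. coeff rn i = 0"
      and rn: "\<And>v. \<forall>i\<ge>n. coeff v i = 0 \<Longrightarrow> integral {a..b} (\<lambda>x. poly v x * (x ^ n - poly rn x)) = 0"
      using Suc.IH cpow by blast
    define q where "q = monom 1 n - rn"
    have pq: "poly q x = x ^ n - poly rn x" for x unfolding q_def by (simp add: poly_monom)
    have cq: "coeff q n = 1" unfolding q_def using rn0 by simp
    have q0: "\<forall>i\<ge>Suc n. coeff q i = 0" unfolding q_def using rn0 by simp
    have orth: "integral {a..b} (\<lambda>x. poly w x * poly q x) = 0" if "\<forall>i\<ge>n. coeff w i = 0" for w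
      unfolding pq using rn[OF that] .
    define Q where "Q = integral {a..b} (\<lambda>x. poly q x * poly q x)"
    have cpq: "continuous_on {a..b} (\<lambda>x. poly q x)" by (intro continuous_intros)
    have "Q \<ge> 0" unfolding Q_def
      by (intro Henstock_Kurzweil_Integration.integral_nonneg integrable_continuous_interval continuous_intros) auto
    moreover have "Q \<noteq> 0"
    proof
      assume "Q = 0"
      then have "\<And>x. x \<in> {a..b} \<Longrightarrow> poly q x = 0" using sq_int[OF ab cpq] unfolding Q_def by blast
      then have "q = 0" by (rule poly_zero_on[OF ab])
      then show False using cq by simp
    qed
    ultimately have Qpos: "Q > 0" by simp
    define X where "X = integral {a..b} (\<lambda>x. poly q x * (G x - poly r x))"
    define c where "c = X / Q"
    show "\<exists>r'. (\<forall>i\<ge>Suc n. coeff r' i = 0) \<and>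
       (\<forall>v. (\<forall>i\<ge>Suc n. coeff v i = 0) \<longrightarrow> integral {a..b} (\<lambda>x. poly v x * (G x - poly r' x)) = 0)"
    proof (rule exI[of _ "r + smult c q"], rule conjI)
      show "\<forall>i\<ge>Suc n. coeff (r + smult c q) i = 0" using r0 q0 by simp
    next
     show "\<forall>v. (\<forall>i\<ge>Suc n. coeff v i = 0) \<longrightarrow> integral {a..b} (\<lambda>x. poly v x * (G x - poly (r + smult c q) x)) = 0"
     proof (intro allI impI)
      fix v :: "real poly" assume v0: "\<forall>i\<ge>Suc n. coeff v i = 0"
      define \<alpha> where "\<alpha> = coeff v n"
      define w where "w = v - smult \<alpha> q"
      have w0: "\<forall>i\<ge>n. coeff w i = 0"
      proof (intro allI impI)
        fix i assume "n \<le> i"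
        then consider "i = n" | "i \<ge> Suc n" by linarith
        then show "coeff w i = 0" unfolding w_def \<alpha>_def using cq v0 q0 by cases auto
      qed
      have pw: "poly v x * (G x - poly (r + smult c q) x) =
          poly w x * (G x - poly r x) - c * (poly w x * poly q x) + \<alpha> * (poly q x * (G x - poly r x))
          - (\<alpha> * c) * (poly q x * poly q x)" for x
        unfolding w_def by (simp add: algebra_simps)
      have "integral {a..b} (\<lambda>x. poly v x * (G x - poly (r + smult c q) x)) =
          integral {a..b} (\<lambda>x. poly w x * (G x - poly r x)) - c * integral {a..b} (\<lambda>x. poly w x * poly q x)
          + \<alpha> * X - (\<alpha> * c) * Q"
        unfolding pw X_def Q_def
        by (rule int_lin4) (intro continuous_intros cG)+
      also have "\<dots> = \<alpha> * X - \<alpha> * c * Q" using r[OF w0] orth[OF w0] by simp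
      also have "\<dots> = 0" unfolding c_def using Qpos by simp
      finally show "integral {a..b} (\<lambda>x. poly v x * (G x - poly (r + smult c q) x)) = 0" .
     qed
    qed
  qed
qed

lemma proj_deg:
  fixes a b :: real
  assumes "a < b" "continuous_on {a..b} (G :: real \<Rightarrow> real)"
  shows "\<exists>r. degree r \<le> D \<and> (\<forall>v. degree v \<le> D \<longrightarrow> integral {a..b} (\<lambda>x. poly v x * (G x - poly r x)) = 0)"
proof -
  obtain r where r0: "\<forall>i\<ge>Suc D. coeff r i = 0"
    and r: "\<And>v. \<forall>i\<ge>Suc D. coeff v i = 0 \<Longrightarrow> integral {a..b} (\<lambda>x. poly v x * (G x - poly r x)) = 0"
    using proj_ex[OF assms(1), of "Suc D"] assms(2) by blast
  show ?thesis
  proof (intro exI[of _ r] conjI allI impI)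
    show "degree r \<le> D" using r0 by (intro degree_le) auto
    fix v :: "real poly" assume "degree v \<le> D"
    then have "\<forall>i\<ge>Suc D. coeff v i = 0" by (auto intro: coeff_eq_0)
    then show "integral {a..b} (\<lambda>x. poly v x * (G x - poly r x)) = 0" by (rule r)
  qed
qed

lemma poly_of_coeffs:
  fixes d :: "nat \<Rightarrow> real"
  assumes "\<And>l. D < l \<Longrightarrow> l \<le> m \<Longrightarrow> d l = 0"
  shows "\<exists>v. degree v \<le> D \<and> (\<forall>x. poly v x = (\<Sum>l\<le>m. d l * x ^ l))"
proof (intro exI[of _ "\<Sum>l\<le>m. monom (d l) l"] conjI allI)
  show "degree (\<Sum>l\<le>m. monom (d l) l) \<le> D"
  proof (rule degree_le, intro allI impI)
    fix i assume "D < i"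
    have "coeff (\<Sum>l\<le>m. monom (d l) l) i = (\<Sum>l\<le>m. if l = i then d l else 0)"
      by (simp add: coeff_sum)
    also have "\<dots> = (if i \<le> m then d i else 0)" by simp
    also have "\<dots> = 0" using assms \<open>D < i\<close> by simp
    finally show "coeff (\<Sum>l\<le>m. monom (d l) l) i = 0" .
  qed
  fix x show "poly (\<Sum>l\<le>m. monom (d l) l) x = (\<Sum>l\<le>m. d l * x ^ l)"
    by (simp add: poly_sum poly_monom)
qed

lemma poly_as_sum:
  fixes r :: "real poly"
  assumes "degree r \<le> m"
  shows "poly r x = (\<Sum>l\<le>m. coeff r l * x ^ l)"
proof -
  have "poly r x = (\<Sum>l\<le>degree r. coeff r l * x ^ l)" by (rule poly_altdef)
  also have "\<dots> = (\<Sum>l\<le>m. coeff r l * x ^ l)"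
    by (rule sum.mono_neutral_left) (use assms in \<open>auto simp: coeff_eq_0\<close>)
  finally show ?thesis .
qed



definition Fr :: "nat \<Rightarrow> (nat \<Rightarrow> nat \<Rightarrow> nat \<Rightarrow> real \<Rightarrow> real) \<Rightarrow> nat \<Rightarrow> (nat \<Rightarrow> nat \<Rightarrow> real) \<Rightarrow> real \<Rightarrow> real" where
  "Fr m E j c \<xi> = (\<Sum>k\<le>m. \<Sum>l\<le>m. c k l * E j k l \<xi>)"

definition Rw :: "nat \<Rightarrow> (nat \<Rightarrow> nat \<Rightarrow> real) \<Rightarrow> nat \<Rightarrow> real \<Rightarrow> real" where
  "Rw m c k \<xi> = (\<Sum>l\<le>m. c k l * \<xi> ^ l)"

definition C3 :: "nat \<Rightarrow> (nat \<Rightarrow> nat \<Rightarrow> nat \<Rightarrow> real \<Rightarrow> real) \<Rightarrow> real \<Rightarrow> real \<Rightarrow> real \<Rightarrow> real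
   \<Rightarrow> (nat \<Rightarrow> nat \<Rightarrow> real) \<Rightarrow> (nat \<Rightarrow> nat \<Rightarrow> real) \<Rightarrow> nat \<Rightarrow> bool" where
  "C3 m E x0 x1 ba bb a b j \<longleftrightarrow> (\<forall>v :: real poly. degree v \<le> m - 2 - j \<longrightarrow>
      integral {x0..x1} (\<lambda>\<xi>. poly v \<xi> * (ba * Fr m E j a \<xi> - bb * Fr m E j b \<xi>)) = 0)"

definition CondA :: "nat \<Rightarrow> (nat \<Rightarrow> nat \<Rightarrow> nat \<Rightarrow> real \<Rightarrow> real) \<Rightarrow> real \<Rightarrow> real \<Rightarrow> real \<Rightarrow> real
   \<Rightarrow> (nat \<Rightarrow> nat \<Rightarrow> real) \<Rightarrow> (nat \<Rightarrow> nat \<Rightarrow> real) \<Rightarrow> bool" where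
  "CondA m E x0 x1 ba bb a b \<longleftrightarrow>
     (\<forall>\<xi>\<in>{x0..x1}. Rw m a 0 \<xi> - Rw m b 0 \<xi> = 0) \<and>
     (\<forall>\<xi>\<in>{x0..x1}. ba * Rw m a 1 \<xi> - bb * Rw m b 1 \<xi> = 0) \<and>
     (\<forall>j. j \<le> m - 2 \<and> 2 \<le> m \<longrightarrow> C3 m E x0 x1 ba bb a b j)"

lemma C3_swap: "C3 m E x0 x1 ba bb a b j \<longleftrightarrow> C3 m E x0 x1 bb ba b a j"
proof -
  have "integral {x0..x1} (\<lambda>\<xi>. poly v \<xi> * (ba * Fr m E j a \<xi> - bb * Fr m E j b \<xi>)) =
     - integral {x0..x1} (\<lambda>\<xi>. poly v \<xi> * (bb * Fr m E j b \<xi> - ba * Fr m E j a \<xi>))" for v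
  proof -
    have "integral {x0..x1} (\<lambda>\<xi>. poly v \<xi> * (ba * Fr m E j a \<xi> - bb * Fr m E j b \<xi>)) =
       integral {x0..x1} (\<lambda>\<xi>. - (poly v \<xi> * (bb * Fr m E j b \<xi> - ba * Fr m E j a \<xi>)))"
      by (simp add: algebra_simps)
    then show ?thesis by simp
  qed
  then show ?thesis unfolding C3_def by auto
qed

lemma CondA_swap: "CondA m E x0 x1 ba bb a b \<longleftrightarrow> CondA m E x0 x1 bb ba b a"
  unfolding CondA_def C3_swap[of m E x0 x1 ba bb a b] by auto

lemma Fr_cont:
  assumes "\<And>j k l. continuous_on S (E j k l)"
  shows "continuous_on S (Fr m E j c)"
  unfolding Fr_def[abs_def]
  by (intro continuous_on_sum continuous_on_mult continuous_on_const assms)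

lemma Fdiff:
  assumes Eh: "\<And>j k l \<xi>. j + 2 < k \<Longrightarrow> \<xi> \<in> S \<Longrightarrow> E j k l \<xi> = 0"
    and Et: "\<And>j l \<xi>. \<xi> \<in> S \<Longrightarrow> E j (j + 2) l \<xi> = \<kappa> j * \<xi> ^ l"
    and jm: "j + 2 \<le> m" and low: "\<And>k l. k < j + 2 \<Longrightarrow> c k l = d k l" and x: "\<xi> \<in> S"
  shows "Fr m E j c \<xi> - Fr m E j d \<xi> = \<kappa> j * (\<Sum>l\<le>m. (c (j + 2) l - d (j + 2) l) * \<xi> ^ l)"
proof -
  have "Fr m E j c \<xi> - Fr m E j d \<xi> = (\<Sum>k\<le>m. \<Sum>l\<le>m. (c k l - d k l) * E j k l \<xi>)"
    unfolding Fr_def by (simp add: sum_subtractf left_diff_distrib)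
  also have "\<dots> = (\<Sum>k\<le>m. if k = j + 2 then \<kappa> j * (\<Sum>l\<le>m. (c (j + 2) l - d (j + 2) l) * \<xi> ^ l) else 0)"
  proof (rule sum.cong[OF refl])
    fix k assume "k \<in> {..m}"
    consider "k < j + 2" | "k = j + 2" | "j + 2 < k" by linarith
    then show "(\<Sum>l\<le>m. (c k l - d k l) * E j k l \<xi>) =
       (if k = j + 2 then \<kappa> j * (\<Sum>l\<le>m. (c (j + 2) l - d (j + 2) l) * \<xi> ^ l) else 0)"
    proof cases
      case 1 then show ?thesis using low by simp
    next
      case 2 then show ?thesis using Et[OF x] by (simp add: sum_distrib_left mult_ac)
    next
      case 3 then show ?thesis using Eh[OF _ x] by simp
    qed
  qed
  also have "\<dots> = \<kappa> j * (\<Sum>l\<le>m. (c (j + 2) l - d (j + 2) l) * \<xi> ^ l)"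
    using jm by simp
  finally show ?thesis .
qed



lemma core:
  fixes E :: "nat \<Rightarrow> nat \<Rightarrow> nat \<Rightarrow> real \<Rightarrow> real" and \<kappa> :: "nat \<Rightarrow> real"
  assumes x01: "x0 < x1" and ba: "0 < ba" and bb: "0 < bb" and m1: "1 \<le> m"
    and Ec: "\<And>j k l. continuous_on {x0..x1} (E j k l)"
    and Eh: "\<And>j k l \<xi>. j + 2 < k \<Longrightarrow> \<xi> \<in> {x0..x1} \<Longrightarrow> E j k l \<xi> = 0"
    and Et: "\<And>j l \<xi>. \<xi> \<in> {x0..x1} \<Longrightarrow> E j (j + 2) l \<xi> = \<kappa> j * \<xi> ^ l"
    and \<kappa>: "\<And>j. \<kappa> j \<noteq> 0"
    and a: "a \<in> bipoly m"
  shows "\<exists>!b. b \<in> bipoly m \<and> CondA m E x0 x1 ba bb a b"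
proof -
  let ?I = "{x0..x1}"
  have Fc: "continuous_on ?I (Fr m E j c)" for j c by (rule Fr_cont[OF Ec])
  have Fd: "\<And>j c d \<xi>. j + 2 \<le> m \<Longrightarrow> (\<And>k l. k < j + 2 \<Longrightarrow> c k l = d k l) \<Longrightarrow> \<xi> \<in> ?I \<Longrightarrow>
     Fr m E j c \<xi> - Fr m E j d \<xi> = \<kappa> j * (\<Sum>l\<le>m. (c (j + 2) l - d (j + 2) l) * \<xi> ^ l)"
    by (rule Fdiff[where E=E and S="?I" and \<kappa>=\<kappa>]) (simp_all add: Eh Et[simplified])
  have ex: "n \<le> Suc m \<Longrightarrow> \<exists>b\<in>bipoly m. (\<forall>k\<ge>n. \<forall>l. b k l = 0) \<and>
     (1 \<le> n \<longrightarrow> (\<forall>\<xi>\<in>?I. Rw m a 0 \<xi> - Rw m b 0 \<xi> = 0)) \<and>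
     (2 \<le> n \<longrightarrow> (\<forall>\<xi>\<in>?I. ba * Rw m a 1 \<xi> - bb * Rw m b 1 \<xi> = 0)) \<and>
     (\<forall>j. j + 2 < n \<and> j \<le> m - 2 \<and> 2 \<le> m \<longrightarrow> C3 m E x0 x1 ba bb a b j)" for n
  proof (induction n)
    case 0
    show ?case by (rule bexI[of _ "\<lambda>k l. 0"]) (auto simp: bipoly_def)
  next
    case (Suc n)
    then obtain b where b: "b \<in> bipoly m" and bz: "\<forall>k\<ge>n. \<forall>l. b k l = 0"
      and b1: "1 \<le> n \<longrightarrow> (\<forall>\<xi>\<in>?I. Rw m a 0 \<xi> - Rw m b 0 \<xi> = 0)"
      and b2: "2 \<le> n \<longrightarrow> (\<forall>\<xi>\<in>?I. ba * Rw m a 1 \<xi> - bb * Rw m b 1 \<xi> = 0)"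
      and b3: "\<forall>j. j + 2 < n \<and> j \<le> m - 2 \<and> 2 \<le> m \<longrightarrow> C3 m E x0 x1 ba bb a b j"
      by auto
    have nm: "n \<le> m" using Suc.prems by simp
    consider "n = 0" | "n = 1" | "2 \<le> n" by linarith
    then show ?case
    proof cases
      case 1
      show ?thesis
      proof (rule bexI[of _ "\<lambda>k l. if k = 0 then a 0 l else 0"], intro conjI)
        show "(\<lambda>k l. if k = 0 then a 0 l else 0) \<in> bipoly m" using a by (auto simp: bipoly_def)
      qed (use 1 in \<open>auto simp: Rw_def\<close>)
    next
      case 2
      define b' where "b' = (\<lambda>k l. if k = 1 then ba / bb * a 1 l else b k l)"
      show ?thesis
      proof (rule bexI[of _ b'], intro conjI)
        show "b' \<in> bipoly m" using a b unfolding b'_def bipoly_def by auto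
        show "\<forall>k\<ge>Suc n. \<forall>l. b' k l = 0" using bz 2 unfolding b'_def by auto
        show "1 \<le> Suc n \<longrightarrow> (\<forall>\<xi>\<in>?I. Rw m a 0 \<xi> - Rw m b' 0 \<xi> = 0)"
          using b1 bz 2 unfolding b'_def Rw_def by (auto simp: a[unfolded bipoly_def])
        show "2 \<le> Suc n \<longrightarrow> (\<forall>\<xi>\<in>?I. ba * Rw m a 1 \<xi> - bb * Rw m b' 1 \<xi> = 0)"
          using bb unfolding b'_def Rw_def by (simp add: sum_distrib_left mult_ac)
        show "\<forall>j. j + 2 < Suc n \<and> j \<le> m - 2 \<and> 2 \<le> m \<longrightarrow> C3 m E x0 x1 ba bb a b' j"
          using 2 by simp
      qed
    next
      case 3
      define j0 where "j0 = n - 2"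
      have n: "n = j0 + 2" using 3 unfolding j0_def by simp
      define G where "G = (\<lambda>\<xi>. (ba * Fr m E j0 a \<xi> - bb * Fr m E j0 b \<xi>) / (bb * \<kappa> j0))"
      have cG: "continuous_on ?I G" unfolding G_def
        by (intro continuous_on_divide continuous_on_diff continuous_on_mult continuous_on_const Fc)
           (use bb \<kappa> in auto)
      obtain r where rd: "degree r \<le> m - n"
        and r: "\<And>v. degree v \<le> m - n \<Longrightarrow> integral ?I (\<lambda>x. poly v x * (G x - poly r x)) = 0"
        using proj_deg[OF x01 cG, of "m - n"] by blast
      define b' where "b' = (\<lambda>k l. if k = n then coeff r l else b k l)"
      have low: "\<And>k l. k < n \<Longrightarrow> b' k l = b k l" unfolding b'_def by simp
      show ?thesis
      proof (rule bexI[of _ b'], intro conjI)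
        show "b' \<in> bipoly m"
          unfolding bipoly_def
        proof (intro CollectI allI impI)
          fix k l assume kl: "m < k + l"
          show "b' k l = 0"
          proof (cases "k = n")
            case True
            then have "m - n < l" using kl nm by linarith
            then have "degree r < l" using rd by linarith
            then show ?thesis using True unfolding b'_def by (simp add: coeff_eq_0)
          next
            case False then show ?thesis using b kl unfolding b'_def bipoly_def by auto
          qed
        qed
        show "\<forall>k\<ge>Suc n. \<forall>l. b' k l = 0" using bz unfolding b'_def by auto
        show "1 \<le> Suc n \<longrightarrow> (\<forall>\<xi>\<in>?I. Rw m a 0 \<xi> - Rw m b' 0 \<xi> = 0)"
          using b1 3 low unfolding Rw_def by simp
        show "2 \<le> Suc n \<longrightarrow> (\<forall>\<xi>\<in>?I. ba * Rw m a 1 \<xi> - bb * Rw m b' 1 \<xi> = 0)"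
          using b2 3 low unfolding Rw_def by simp
        show "\<forall>j. j + 2 < Suc n \<and> j \<le> m - 2 \<and> 2 \<le> m \<longrightarrow> C3 m E x0 x1 ba bb a b' j"
        proof (intro allI impI)
          fix j assume jj: "j + 2 < Suc n \<and> j \<le> m - 2 \<and> 2 \<le> m"
          then have jm: "j + 2 \<le> m" by linarith
          show "C3 m E x0 x1 ba bb a b' j"
          proof (cases "j + 2 < n")
            case True
            have "Fr m E j b' \<xi> = Fr m E j b \<xi>" if "\<xi> \<in> ?I" for \<xi>
              using Fd[OF jm _ that, of b' b] low True by simp
            then have "integral ?I (\<lambda>\<xi>. poly v \<xi> * (ba * Fr m E j a \<xi> - bb * Fr m E j b' \<xi>)) =
                integral ?I (\<lambda>\<xi>. poly v \<xi> * (ba * Fr m E j a \<xi> - bb * Fr m E j b \<xi>))" for v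
              by (intro Henstock_Kurzweil_Integration.integral_cong) simp
            moreover have "C3 m E x0 x1 ba bb a b j" using b3 jj True by blast
            ultimately show ?thesis unfolding C3_def by simp
          next
            case False
            then have jn: "j = j0" using jj n by linarith
            have eqp: "poly v \<xi> * (ba * Fr m E j a \<xi> - bb * Fr m E j b' \<xi>) =
                (bb * \<kappa> j0) * (poly v \<xi> * (G \<xi> - poly r \<xi>))" if "\<xi> \<in> ?I" for \<xi> v
            proof -
              have "Fr m E j b' \<xi> - Fr m E j b \<xi> = \<kappa> j * (\<Sum>l\<le>m. (b' (j + 2) l - b (j + 2) l) * \<xi> ^ l)"
                using Fd[OF jm _ that, of b' b] low jn n by simp
              also have "\<dots> = \<kappa> j * poly r \<xi>"
                using bz jn n rd by (simp add: b'_def poly_as_sum[of r m])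
              finally have "Fr m E j b' \<xi> = Fr m E j b \<xi> + \<kappa> j * poly r \<xi>" by simp
              then show ?thesis unfolding G_def jn using bb \<kappa>[of j0]
                by (simp add: field_simps)
            qed
            show ?thesis unfolding C3_def
            proof (intro allI impI)
              fix v :: "real poly" assume dv: "degree v \<le> m - 2 - j"
              have "integral ?I (\<lambda>\<xi>. poly v \<xi> * (ba * Fr m E j a \<xi> - bb * Fr m E j b' \<xi>)) =
                  integral ?I (\<lambda>\<xi>. (bb * \<kappa> j0) * (poly v \<xi> * (G \<xi> - poly r \<xi>)))"
                by (rule Henstock_Kurzweil_Integration.integral_cong) (rule eqp)
              also have "\<dots> = (bb * \<kappa> j0) * integral ?I (\<lambda>\<xi>. poly v \<xi> * (G \<xi> - poly r \<xi>))"
                by (rule int_cmul)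
              also have "\<dots> = 0" using r[of v] dv jn n by simp
              finally show "integral ?I (\<lambda>\<xi>. poly v \<xi> * (ba * Fr m E j a \<xi> - bb * Fr m E j b' \<xi>)) = 0" .
            qed
          qed
        qed
      qed
    qed
  qed
  obtain b where b: "b \<in> bipoly m"
      and h1: "1 \<le> Suc m \<longrightarrow> (\<forall>\<xi>\<in>?I. Rw m a 0 \<xi> - Rw m b 0 \<xi> = 0)"
      and h2: "2 \<le> Suc m \<longrightarrow> (\<forall>\<xi>\<in>?I. ba * Rw m a 1 \<xi> - bb * Rw m b 1 \<xi> = 0)"
      and h3: "\<forall>j. j + 2 < Suc m \<and> j \<le> m - 2 \<and> 2 \<le> m \<longrightarrow> C3 m E x0 x1 ba bb a b j"
    using ex[of "Suc m"] by auto
  have bc: "CondA m E x0 x1 ba bb a b"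
    unfolding CondA_def
  proof (intro conjI allI impI)
    show "\<forall>\<xi>\<in>?I. Rw m a 0 \<xi> - Rw m b 0 \<xi> = 0" using h1 by simp
    show "\<forall>\<xi>\<in>?I. ba * Rw m a 1 \<xi> - bb * Rw m b 1 \<xi> = 0" using h2 m1 by simp
    fix j assume "j \<le> m - 2 \<and> 2 \<le> m"
    then show "C3 m E x0 x1 ba bb a b j" using h3 by auto
  qed
  show ?thesis
  proof (rule ex1I[of _ b])
    show "b \<in> bipoly m \<and> CondA m E x0 x1 ba bb a b" using b bc by simp
    fix b' assume b': "b' \<in> bipoly m \<and> CondA m E x0 x1 ba bb a b'"
    have rows: "\<forall>l. b' k l = b k l" for k
    proof (induction k rule: less_induct)
      case (less k)
      show ?case
      proof (cases "m < k")
        case True then show ?thesis using b b' unfolding bipoly_def by auto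
      next
        case False
        then have km: "k \<le> m" by simp
        have zero_out: "b' k l = b k l" if "m - k < l" for l
          using b b' that km unfolding bipoly_def by auto
        consider "k = 0" | "k = 1" | "2 \<le> k" by linarith
        then show ?thesis
        proof cases
          case 1
          have "(\<Sum>l\<le>m. (b' 0 l - b 0 l) * \<xi> ^ l) = 0" if "\<xi> \<in> ?I" for \<xi>
            using b' bc that unfolding CondA_def Rw_def by (simp add: sum_subtractf left_diff_distrib)
          then have "l \<le> m \<Longrightarrow> b' 0 l - b 0 l = 0" for l by (rule Z_coeffs[OF x01])
          show ?thesis
          proof
            fix l show "b' k l = b k l"
            proof (cases "l \<le> m")
              case True then show ?thesis using \<open>\<And>l. l \<le> m \<Longrightarrow> b' 0 l - b 0 l = 0\<close>[of l] 1 by simp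
            next
              case False then show ?thesis using zero_out[of l] by simp
            qed
          qed
        next
          case 2
          have "(\<Sum>l\<le>m. (bb * (b' 1 l - b 1 l)) * \<xi> ^ l) = 0" if "\<xi> \<in> ?I" for \<xi>
          proof -
            have "ba * Rw m a 1 \<xi> - bb * Rw m b' 1 \<xi> = 0" "ba * Rw m a 1 \<xi> - bb * Rw m b 1 \<xi> = 0"
              using b' bc that unfolding CondA_def by auto
            then have "bb * Rw m b' 1 \<xi> - bb * Rw m b 1 \<xi> = 0" by simp
            then show ?thesis unfolding Rw_def
              by (simp add: sum_subtractf sum_distrib_left algebra_simps)
          qed
          then have "l \<le> m \<Longrightarrow> bb * (b' 1 l - b 1 l) = 0" for l by (rule Z_coeffs[OF x01])
          then have "l \<le> m \<Longrightarrow> b' 1 l = b 1 l" for l using bb by simp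
          show ?thesis
          proof
            fix l show "b' k l = b k l"
            proof (cases "l \<le> m")
              case True then show ?thesis using \<open>\<And>l. l \<le> m \<Longrightarrow> b' 1 l = b 1 l\<close> 2 by simp
            next
              case False then show ?thesis using zero_out[of l] by simp
            qed
          qed
        next
          case 3
          define j where "j = k - 2"
          have kj: "k = j + 2" using 3 unfolding j_def by simp
          have jm: "j + 2 \<le> m" using km kj by simp
          define d where "d = (\<lambda>l. b' k l - b k l)"
          obtain v where dv: "degree v \<le> m - k" and pv: "\<And>x. poly v x = (\<Sum>l\<le>m. d l * x ^ l)"
            using poly_of_coeffs[of "m - k" m d] zero_out unfolding d_def by auto
          have diff: "Fr m E j b' \<xi> - Fr m E j b \<xi> = \<kappa> j * poly v \<xi>" if "\<xi> \<in> ?I" for \<xi>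
            using Fd[OF jm _ that, of b' b] less.IH kj unfolding pv d_def by simp
          have c1: "C3 m E x0 x1 ba bb a b' j" and c2: "C3 m E x0 x1 ba bb a b j"
            using b' bc jm unfolding CondA_def by auto
          have dv': "degree v \<le> m - 2 - j" using dv kj by simp
          have cv: "continuous_on ?I (\<lambda>\<xi>. poly v \<xi>)" by (intro continuous_intros)
          have "integral ?I (\<lambda>\<xi>. poly v \<xi> * (ba * Fr m E j a \<xi> - bb * Fr m E j b \<xi>)
                 - poly v \<xi> * (ba * Fr m E j a \<xi> - bb * Fr m E j b' \<xi>)) = 0"
            using c1 c2 dv' unfolding C3_def
            by (subst int_lin2) (auto intro!: continuous_intros Fc)
          moreover have "integral ?I (\<lambda>\<xi>. poly v \<xi> * (ba * Fr m E j a \<xi> - bb * Fr m E j b \<xi>)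
                 - poly v \<xi> * (ba * Fr m E j a \<xi> - bb * Fr m E j b' \<xi>)) =
               integral ?I (\<lambda>\<xi>. (bb * \<kappa> j) * (poly v \<xi> * poly v \<xi>))"
          proof (rule Henstock_Kurzweil_Integration.integral_cong)
            fix \<xi> assume x: "\<xi> \<in> ?I"
            have "Fr m E j b' \<xi> = Fr m E j b \<xi> + \<kappa> j * poly v \<xi>" using diff[OF x] by simp
            then show "poly v \<xi> * (ba * Fr m E j a \<xi> - bb * Fr m E j b \<xi>)
                 - poly v \<xi> * (ba * Fr m E j a \<xi> - bb * Fr m E j b' \<xi>) = (bb * \<kappa> j) * (poly v \<xi> * poly v \<xi>)"
              by (simp add: algebra_simps)
          qed
          ultimately have "integral ?I (\<lambda>\<xi>. poly v \<xi> * poly v \<xi>) = 0"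
            using int_cmul[of ?I "bb * \<kappa> j" "\<lambda>\<xi>. poly v \<xi> * poly v \<xi>"] bb \<kappa>[of j] by simp
          then have "poly v \<xi> = 0" if "\<xi> \<in> ?I" for \<xi> using sq_int[OF x01 cv _ that] by blast
          then have "(\<Sum>l\<le>m. d l * \<xi> ^ l) = 0" if "\<xi> \<in> ?I" for \<xi> using pv[of \<xi>] that by simp
          then have "l \<le> m \<Longrightarrow> d l = 0" for l by (rule Z_coeffs[OF x01])
          show ?thesis
          proof
            fix l show "b' k l = b k l"
            proof (cases "l \<le> m")
              case True then show ?thesis using \<open>\<And>l. l \<le> m \<Longrightarrow> d l = 0\<close>[of l] unfolding d_def by simp
            next
              case False then show ?thesis using zero_out[of l] km by simp
            qed
          qed
        qed
      qed
    qed
    show "b' = b" using rows by (intro ext) auto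
  qed
qed



theorem lemma2:
  fixes m :: nat and s :: bool
    and K :: "(real \<times> real) set"
    and \<xi>0 \<xi>1 bm bp :: real
    and J0 J1 J2 :: "real \<Rightarrow> real \<Rightarrow> real"
  assumes "1 \<le> m"
    and "bounded K"
    and "\<xi>0 < \<xi>1"
    and "{(0, \<xi>) | \<xi>. \<xi>0 \<le> \<xi> \<and> \<xi> \<le> \<xi>1} \<subseteq> closure K"
    and "0 < bm" and "0 < bp"
    and "\<exists>U. open U \<and> closure K \<subseteq> U \<and> smooth_on U J0 \<and> smooth_on U J1 \<and> smooth_on U J2"
  shows "\<forall>a \<in> bipoly m. \<exists>!b. b \<in> bipoly m \<and>
           (if s then interface_conds m bm bp J0 J1 J2 \<xi>0 \<xi>1 (beval m b) (beval m a)
                 else interface_conds m bm bp J0 J1 J2 \<xi>0 \<xi>1 (beval m a) (beval m b))"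
proof -
  obtain U where U: "open U" "closure K \<subseteq> U" "smooth_on U J0" "smooth_on U J1" "smooth_on U J2"
    using assms(7) by blast
  have seg: "(0, \<xi>) \<in> U" if "\<xi> \<in> {\<xi>0..\<xi>1}" for \<xi> using assms(4) U(2) that by auto
  have g0: "good U J0" and g1: "good U J1" and g2: "good U J2" using U good_J by auto
  define E where "E = (\<lambda>j k l \<xi>. (pd_eta ^^ j) (LM J0 J1 J2 k l) 0 \<xi>)"
  define \<kappa> where "\<kappa> = (\<lambda>j. fact j * real (j + 2) * real (j + 1) :: real)"
  have Ec: "continuous_on {\<xi>0..\<xi>1} (E j k l)" for j k l
    unfolding E_def by (rule E_cont[OF U(1) g0 g1 g2 seg])
  have Eh: "E j k l \<xi> = 0" if "j + 2 < k" "\<xi> \<in> {\<xi>0..\<xi>1}" for j k l \<xi>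
    unfolding E_def by (rule E_high[OF U(1) g0 g1 g2 seg[OF that(2)] that(1)])
  have Et: "E j (j + 2) l \<xi> = \<kappa> j * \<xi> ^ l" if "\<xi> \<in> {\<xi>0..\<xi>1}" for j l \<xi>
    unfolding E_def \<kappa>_def by (rule E_top[OF U(1) g0 g1 g2 seg[OF that]])
  have \<kappa>0: "\<kappa> j \<noteq> 0" for j unfolding \<kappa>_def by simp
  have Fkey: "(pd_eta ^^ j) (Lop J0 J1 J2 (beval m c)) 0 \<xi> = Fr m E j c \<xi>" if "\<xi> \<in> {\<xi>0..\<xi>1}" for j c \<xi>
    unfolding Fr_def E_def by (rule F_rep[OF U(1) g0 g1 g2 seg[OF that]])
  have IC: "interface_conds m bm bp J0 J1 J2 \<xi>0 \<xi>1 (beval m X) (beval m Y) \<longleftrightarrow>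
      CondA m E \<xi>0 \<xi>1 bp bm Y X" for X Y
  proof -
    have ie: "integral {\<xi>0..\<xi>1} (\<lambda>\<xi>. poly v \<xi> * (bp * (pd_eta ^^ j) (Lop J0 J1 J2 (beval m Y)) 0 \<xi>
                - bm * (pd_eta ^^ j) (Lop J0 J1 J2 (beval m X)) 0 \<xi>)) =
          integral {\<xi>0..\<xi>1} (\<lambda>\<xi>. poly v \<xi> * (bp * Fr m E j Y \<xi> - bm * Fr m E j X \<xi>))" for v j
      by (rule Henstock_Kurzweil_Integration.integral_cong) (simp add: Fkey)
    show ?thesis
      unfolding interface_conds_def CondA_def C3_def ie
      by (simp add: beval_row0 beval_row1[OF assms(1)] Rw_def)
  qed
  show ?thesis
  proof
    fix a assume a: "a \<in> bipoly m"
    show "\<exists>!b. b \<in> bipoly m \<and>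
           (if s then interface_conds m bm bp J0 J1 J2 \<xi>0 \<xi>1 (beval m b) (beval m a)
                 else interface_conds m bm bp J0 J1 J2 \<xi>0 \<xi>1 (beval m a) (beval m b))"
    proof (cases s)
      case True
      then show ?thesis unfolding IC
        using core[where E=E and \<kappa>=\<kappa>, OF assms(3) assms(6) assms(5) assms(1) Ec Eh Et \<kappa>0 a] by simp
    next
      case False
      then show ?thesis unfolding IC CondA_swap[of m E \<xi>0 \<xi>1 bp bm]
        using core[where E=E and \<kappa>=\<kappa>, OF assms(3) assms(5) assms(6) assms(1) Ec Eh Et \<kappa>0 a] by simp
    qed
  qed
qed


end
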